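(* There exists $\epsilon>0$ such that, for all $\mu\in[-1,0.55]$, $d\theta(f_\mu)<-\epsilon$ on $K_\mu\setminus\Delta$.
   Context: The Sprott vector field $f_\mu$ on $\mathbb{R}^3$ is $\dot x=y^2-z-\mu x$, $\dot y=z^2-x-\mu y$, $\dot z=x^2-y-\mu z$. $\Delta:=\mathrm{span}\{(1,1,1)\}$; $\|\mathbf{x}_\perp\|^2=\tfrac23(x^2+y^2+z^2-xy-yz-zx)$; $d\theta:=\frac{1}{\sqrt3}\frac{(z-y)dx+(x-z)dy+(y-x)dz}{\|\mathbf{x}_\perp\|^2}$ on $\mathbb{R}^3\setminus\Delta$. $V(\mathbf{x}):=x+y+z$, $r_\mu:=\|\mathbf{x}-\frac{1+\mu}{2}(1,1,1)\|$, $c:=\frac{3^{3/4}+3^{1/4}}{2}$. For $\mu>-1$, $K_\mu:=\{\mathbf{x}\colon V(\mathbf{x})\ge r_\mu-c(1+\mu)\arctan(\frac{2r_\mu}{3^{1/4}(1+\mu)})-\frac{\sqrt3}{2}(1+\mu)+c(1+\mu)\arctan(3^{1/4})\}\cap V^{-1}[0,3(1+\mu)]$, and $K_{-1}:=\{\mathbf{0}\}$. *)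

theory Defs
  imports "HOL-Analysis.Analysis"
begin

text \<open>Points of R^3 are vectors p :: real^3 with coordinates x = p$1, y = p$2, z = p$3.\<close>

definition sprott :: "real \<Rightarrow> real^3 \<Rightarrow> real^3" where
  "sprott \<mu> p = vector [(p$2)^2 - p$3 - \<mu> * p$1,
                          (p$3)^2 - p$1 - \<mu> * p$2,
                          (p$1)^2 - p$2 - \<mu> * p$3]"

definition diag :: "(real^3) set" where
  "diag = span {vector [1, 1, 1]}"

definition perp_norm_sq :: "real^3 \<Rightarrow> real" where
  "perp_norm_sq p = 2/3 * ((p$1)^2 + (p$2)^2 + (p$3)^2 - p$1*p$2 - p$2*p$3 - p$3*p$1)"

definition dtheta :: "real^3 \<Rightarrow> real^3 \<Rightarrow> real" where
  "dtheta p v = 1 / sqrt 3 *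
     (((p$3 - p$2) * v$1 + (p$1 - p$3) * v$2 + (p$2 - p$1) * v$3) / perp_norm_sq p)"

definition Vfun :: "real^3 \<Rightarrow> real" where
  "Vfun p = p$1 + p$2 + p$3"

definition r_mu :: "real \<Rightarrow> real^3 \<Rightarrow> real" where
  "r_mu \<mu> p = norm (p - ((1 + \<mu>) / 2) *\<^sub>R vector [1, 1, 1])"

definition c_const :: real where
  "c_const = (3 powr (3/4) + 3 powr (1/4)) / 2"

definition K :: "real \<Rightarrow> (real^3) set" where
  "K \<mu> = (if \<mu> = -1 then {0} else
     {p. Vfun p \<ge> r_mu \<mu> p
            - c_const * (1 + \<mu>) * arctan (2 * r_mu \<mu> p / (3 powr (1/4) * (1 + \<mu>)))
            - sqrt 3 / 2 * (1 + \<mu>)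
            + c_const * (1 + \<mu>) * arctan (3 powr (1/4))}
     \<inter> {p. 0 \<le> Vfun p \<and> Vfun p \<le> 3 * (1 + \<mu>)})"

end

theory Submission
  imports Defs
begin


lemma arctan_diff_le:
  fixes a t :: real assumes "0 \<le> a" "a \<le> t"
  shows "arctan t - arctan a \<le> (t - a) / (1 + t * a)"
proof -
  let ?f = "\<lambda>x. arctan x - arctan a - (x - a) / (1 + x * a)"
  have "?f a \<ge> ?f t"
  proof (rule DERIV_nonpos_imp_nonincreasing[OF assms(2)])
    fix x assume x: "a \<le> x" "x \<le> t"
    have pos: "1 + x * a > 0" using x assms by (simp add: add_pos_nonneg)
    have "DERIV ?f x :> inverse (1 + x\<^sup>2) - 0 - ((1 * (1 + x * a) - (x - a) * a) / (1 + x * a)\<^sup>2)"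
      using pos by (auto intro!: derivative_eq_intros simp: power2_eq_square)
    moreover have "inverse (1 + x\<^sup>2) - 0 - ((1 * (1 + x * a) - (x - a) * a) / (1 + x * a)\<^sup>2) \<le> 0"
    proof -
      have e: "1 * (1 + x * a) - (x - a) * a = 1 + a^2" by (simp add: algebra_simps power2_eq_square)
      have "(1 + x*a)^2 \<le> (1 + a^2) * (1 + x^2)"
        using sum_squares_ge_zero[of 0 "x - a"] by (simp add: algebra_simps power2_eq_square)
      hence "inverse (1 + x\<^sup>2) \<le> (1 + a^2) / (1 + x * a)\<^sup>2"
        using pos by (simp add: field_simps inverse_eq_divide add_pos_nonneg)
      thus ?thesis by (subst e) simp
    qed
    ultimately show "\<exists>y. DERIV ?f x :> y \<and> y \<le> 0" by blast
  qed
  thus ?thesis by simp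
qed


lemma poly_id:
  fixes x y z :: real
  defines "P \<equiv> 2/3 * (x^2 + y^2 + z^2 - x*y - y*z - z*x)"
  defines "C \<equiv> x^2*y + y^2*z + z^2*x - x^3 - y^3 - z^3 + (x+y+z) * P"
  shows "P^3 - 2 * C^2 = 3/2 * (3*(x-(x+y+z)/3)*(y-(x+y+z)/3)*(z-(x+y+z)/3)
            - ((x-(x+y+z)/3)-(y-(x+y+z)/3))*((y-(x+y+z)/3)-(z-(x+y+z)/3))*((z-(x+y+z)/3)-(x-(x+y+z)/3)))^2"
  unfolding P_def C_def by algebra

lemma C_bound:
  fixes x y z :: real
  defines "P \<equiv> 2/3 * (x^2 + y^2 + z^2 - x*y - y*z - z*x)"
  defines "C \<equiv> x^2*y + y^2*z + z^2*x - x^3 - y^3 - z^3 + (x+y+z) * P"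
  assumes "P > 0"
  shows "C / P \<le> sqrt (P / 2)"
proof -
  have "2 * C^2 \<le> P^3"
  proof -
    note e = poly_id[of x y z, folded P_def, folded C_def]
    show ?thesis using e zero_le_power2[of "3*(x-(x+y+z)/3)*(y-(x+y+z)/3)*(z-(x+y+z)/3)
            - ((x-(x+y+z)/3)-(y-(x+y+z)/3))*((y-(x+y+z)/3)-(z-(x+y+z)/3))*((z-(x+y+z)/3)-(x-(x+y+z)/3))"]
      by linarith
  qed
  hence "(C/P)^2 \<le> P/2" using assms(3) by (simp add: field_simps power2_eq_square power3_eq_cube)
  thus ?thesis by (rule real_le_rsqrt)
qed

lemma quad_bound:
  fixes k l V r :: real
  assumes k: "k \<le> 17321/10000" "k \<ge> 0" and l: "0 < l" "l \<le> 155/100" and V: "V \<ge> 0"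
    and q: "(2*r - k*l)^2 \<le> 2*V*(l + 2*r)"
  shows "r \<le> 1414/1000 * (145/100 + V)"
proof (rule ccontr)
  assume "\<not> ?thesis"
  hence u: "2*r > 2828/1000 * (145/100 + V)" by simp
  define u0 where "u0 = 2828/1000 * (145/100 + V)"
  have kl: "k*l \<le> 26848/10000" using mult_mono[OF k(1) l(2)] k l by simp
  have kl0: "k*l \<ge> 0" using k l by simp
  have "(u0 - k*l)^2 - 2*V*(l+u0) > 0"
  proof -
    have a: "u0 - k*l \<ge> 41006/10000 - 26848/10000 + 2828/1000*V" unfolding u0_def using kl by (simp add: ring_distribs)
    have b: "41006/10000 - 26848/10000 + 2828/1000*V \<ge> 0" using V by simp
    have "(u0 - k*l)^2 \<ge> (41006/10000 - 26848/10000 + 2828/1000*V)^2"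
      using a b power_mono by blast
    moreover have "2*V*(l+u0) \<le> 2*V*(155/100 + u0)" using V l by (simp add: mult_left_mono)
    moreover have "(41006/10000 - 26848/10000 + 2828/1000*V)^2 - 2*V*(155/100 + u0) > 0"
    proof -
      have "(41006/10000 - 26848/10000 + 2828/1000*V)^2 - 2*V*(155/100 + u0)
         = 23/10 * (V - 2058397/2875000)^2 + 2599/62500 * V^2 + 2966636434141/3593750000000"
        unfolding u0_def by algebra
      moreover have "0 \<le> 23/10 * (V - 2058397/2875000)^2" by simp
      moreover have "0 \<le> 2599/62500 * V^2" by simp
      ultimately show ?thesis by linarith
    qed
    ultimately show ?thesis by linarith
  qed
  moreover have "(2*r - k*l)^2 - 2*V*(l+2*r) - ((u0 - k*l)^2 - 2*V*(l+u0))
      = (2*r - u0) * (2*r + u0 - 2*k*l - 2*V)"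
    by (simp add: power2_eq_square algebra_simps)
  moreover have "(2*r - u0) * (2*r + u0 - 2*k*l - 2*V) \<ge> 0"
  proof (rule mult_nonneg_nonneg)
    show "0 \<le> 2*r - u0" using u unfolding u0_def by linarith
    have "0 \<le> 2*r + u0 - 2*(k*l) - 2*V" using u kl V unfolding u0_def by (simp add: ring_distribs)
    thus "0 \<le> 2*r + u0 - 2*k*l - 2*V" by (simp add: mult.assoc)
  qed
  ultimately show False using q by linarith
qed


lemma sqrt3_bounds: "1732/1000 \<le> sqrt (3::real)" "sqrt (3::real) \<le> 17321/10000"
  by (rule real_le_rsqrt, simp add: power2_eq_square) (rule real_le_lsqrt, auto simp: power2_eq_square)

lemma K_r_bound:
  assumes mu: "-1 < \<mu>" "\<mu> \<le> 55/100" and pK: "p \<in> K \<mu>"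
  shows "r_mu \<mu> p \<le> 1414/1000 * (145/100 + Vfun p)" and "Vfun p \<ge> 0"
proof -
  define l where "l = 1 + \<mu>"
  define r where "r = r_mu \<mu> p"
  define V where "V = Vfun p"
  define a where "a = (3::real) powr (1/4)"
  define k where "k = sqrt (3::real)"
  have l: "0 < l" "l \<le> 155/100" using mu unfolding l_def by auto
  have a0: "a > 0" unfolding a_def by simp
  have a2: "a^2 = k" unfolding a_def k_def
    by (simp add: powr_power powr_half_sqrt[symmetric])
  have c: "c_const = a * (k + 1) / 2"
  proof -
    have "(3::real) powr (3/4) = 3 powr (1/4) * 3 powr (1/2)" by (simp add: powr_add[symmetric])
    thus ?thesis unfolding c_const_def a_def k_def by (simp add: powr_half_sqrt algebra_simps)
  qed
  have k: "k \<le> 17321/10000" "k \<ge> 1732/1000" using sqrt3_bounds unfolding k_def by auto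
  have kk: "k^2 = 3" unfolding k_def by simp
  have Kc: "V \<ge> r - c_const * l * arctan (2 * r / (a * l)) - k / 2 * l + c_const * l * arctan a"
     and V0: "V \<ge> 0"
    using pK mu unfolding K_def l_def r_def V_def a_def k_def by auto
  show "Vfun p \<ge> 0" using V0 V_def by simp
  have r0: "r \<ge> 0" unfolding r_def r_mu_def by simp
  show "r_mu \<mu> p \<le> 1414/1000 * (145/100 + Vfun p)"
  proof (cases "2*r \<le> k*l")
    case True
    have "k*l \<le> 17321/10000 * (155/100)" using mult_mono[OF k(1) l(2)] k l by simp
    thus ?thesis using True V0 unfolding r_def V_def by simp
  next
    case False
    define t where "t = 2 * r / (a * l)"
    have at: "a \<le> t" unfolding t_def using False a0 l a2
      by (simp add: field_simps power2_eq_square mult.assoc[symmetric])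
    have arc: "arctan t - arctan a \<le> (t - a) / (1 + t * a)"
      by (rule arctan_diff_le) (use a0 at in auto)
    have eq: "c_const * l * ((t - a) / (1 + t * a)) = (k+1)/2 * l * (2*r - k*l) / (l + 2*r)"
    proof -
      have "1 + t*a = (l + 2*r)/l" unfolding t_def using a0 l by (simp add: field_simps)
      moreover have "t - a = (2*r - k*l)/(a*l)" unfolding t_def using a0 l a2
        by (simp add: field_simps power2_eq_square)
      ultimately have e1: "(t - a) / (1 + t*a) = ((2*r - k*l)/(a*l)) / ((l+2*r)/l)" by simp
      have lr: "l + 2*r > 0" using l r0 by simp
      have gen: "\<And>a l D X K::real. a > 0 \<Longrightarrow> l > 0 \<Longrightarrow> D > 0 \<Longrightarrow>
          a * K / 2 * l * ((X/(a*l))/(D/l)) = K/2*l*X/D" by (simp add: field_simps)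
      show ?thesis unfolding c e1 using gen[OF a0 l(1) lr] by simp
    qed
    have cl0: "c_const * l \<ge> 0" unfolding c using a0 l k by simp
    have "V \<ge> r - k/2*l - (k+1)/2 * l * (2*r - k*l) / (l + 2*r)"
    proof -
      have "c_const * l * (arctan t - arctan a) \<le> c_const * l * ((t - a) / (1 + t * a))"
        using arc cl0 by (rule mult_left_mono)
      thus ?thesis using Kc eq unfolding t_def by (simp add: algebra_simps)
    qed
    moreover have "r - k/2*l - (k+1)/2 * l * (2*r - k*l) / (l + 2*r) = (2*r - k*l)^2 / (2*(l+2*r))"
      using l r0 kk by (simp add: field_simps power2_eq_square)
    ultimately have "(2*r - k*l)^2 / (2*(l+2*r)) \<le> V" by simp
    hence "(2*r - k*l)^2 \<le> 2*V*(l + 2*r)" using l r0 by (simp add: field_simps)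
    from quad_bound[OF k(1) _ l V0 this] k show ?thesis unfolding r_def V_def by simp
  qed
qed



theorem theorem6:
  shows "\<exists>\<epsilon>>0. \<forall>\<mu>\<in>{-1..55/100::real}. \<forall>p\<in>K \<mu> - diag.
           dtheta p (sprott \<mu> p) < - \<epsilon>"
proof (intro exI[of _ "1/50"] conjI ballI)
  fix \<mu> :: real and p :: "real^3"
  assume mu: "\<mu> \<in> {-1..55/100}" and p: "p \<in> K \<mu> - diag"
  have "\<mu> \<noteq> -1"
  proof
    assume "\<mu> = -1"
    hence "p = 0" using p unfolding K_def by simp
    thus False using p unfolding diag_def by (simp add: span_zero)
  qed
  hence mu': "-1 < \<mu>" "\<mu> \<le> 55/100" using mu by auto
  have pK: "p \<in> K \<mu>" using p by simp
  define x where "x = p$1"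
  define y where "y = p$2"
  define z where "z = p$3"
  define l where "l = 1 + \<mu>"
  define P where "P = 2/3 * (x^2 + y^2 + z^2 - x*y - y*z - z*x)"
  define V where "V = x + y + z"
  define C where "C = x^2*y + y^2*z + z^2*x - x^3 - y^3 - z^3 + (x+y+z) * P"
  have PP: "perp_norm_sq p = P" unfolding perp_norm_sq_def P_def x_def y_def z_def by simp
  have VV: "Vfun p = V" unfolding Vfun_def V_def x_def y_def z_def by simp
  have PS: "P = ((x-y)^2 + (y-z)^2 + (z-x)^2)/3" unfolding P_def by algebra
  have P0: "P \<ge> 0"
  proof -
    note PS
    moreover have "(x-y)^2 + (y-z)^2 + (z-x)^2 \<ge> 0" by simp
    ultimately show ?thesis by (metis divide_nonneg_pos zero_less_numeral)
  qed
  have Ppos: "P > 0"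
  proof (rule ccontr)
    assume "\<not> P > 0"
    hence "P = 0" using P0 by simp
    hence "(x-y)^2 + (y-z)^2 + (z-x)^2 = 0" using PS by simp
    hence "(x-y)^2 = 0" "(y-z)^2 = 0"
      using zero_le_power2[of "x-y"] zero_le_power2[of "y-z"] zero_le_power2[of "z-x"] by linarith+
    hence "x = y" "y = z" by simp_all
    hence "p$1 = x" "p$2 = x" "p$3 = x" using x_def y_def z_def by simp_all
    hence "p = x *\<^sub>R vector [1,1,1]"
      by (simp add: vec_eq_iff forall_3)
    hence "p \<in> diag" unfolding diag_def by (simp add: span_base span_mul)
    thus False using p by simp
  qed
  have rsq: "(r_mu \<mu> p)^2 = (x - l/2)^2 + (y - l/2)^2 + (z - l/2)^2"
    unfolding r_mu_def l_def x_def y_def z_def norm_vec_def L2_set_def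
    by (simp add: sum_3)
  have Pr: "P \<le> (r_mu \<mu> p)^2"
  proof -
    have "(r_mu \<mu> p)^2 - P = 3 * ((x+y+z)/3 - l/2)^2" unfolding rsq P_def
      by (simp add: power2_eq_square field_simps)
    thus ?thesis using zero_le_power2[of "(x+y+z)/3 - l/2"] by linarith
  qed
  have r0: "r_mu \<mu> p \<ge> 0" unfolding r_mu_def by simp
  have rb: "r_mu \<mu> p \<le> 1414/1000 * (145/100 + V)" using K_r_bound(1)[OF mu' pK] VV by simp
  have V0: "V \<ge> 0" using K_r_bound(2)[OF mu' pK] VV by simp
  have CP: "C / P \<le> sqrt (P/2)" by (rule C_bound[of x y z, folded P_def, folded C_def, OF Ppos])
  have "sqrt (P/2) \<le> r_mu \<mu> p * (1000/1414)"
  proof (rule real_le_lsqrt)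
    show "0 \<le> r_mu \<mu> p * (1000 / 1414)" using r0 by simp
    have c2: "(1000/1414::real)^2 \<ge> 1/2" by (simp add: power2_eq_square)
    have "(r_mu \<mu> p)^2 * (1/2) \<le> (r_mu \<mu> p)^2 * (1000/1414)^2"
      by (rule mult_left_mono[OF c2 zero_le_power2])
    hence "P/2 \<le> (r_mu \<mu> p)^2 * (1000/1414)^2" using Pr by linarith
    thus "P/2 \<le> (r_mu \<mu> p * (1000 / 1414))\<^sup>2" by (simp only: power_mult_distrib)
  qed
  moreover have "r_mu \<mu> p * (1000/1414) \<le> 145/100 + V"
  proof -
    have "r_mu \<mu> p * (1000/1414) \<le> (1414/1000 * (145/100+V)) * (1000/1414)"
      by (rule mult_right_mono[OF rb]) simp
    also have "\<dots> = 145/100+V" by simp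
    finally show ?thesis .
  qed
  ultimately have CP2: "C / P \<le> 145/100 + V" using CP by linarith
  have N: "(z - y) * (sprott \<mu> p)$1 + (x - z) * (sprott \<mu> p)$2 + (y - x) * (sprott \<mu> p)$3
      = -3/2 * P - V * P + C"
  proof -
    have s1: "(sprott \<mu> p)$1 = y^2 - z - \<mu>*x" "(sprott \<mu> p)$2 = z^2 - x - \<mu>*y"
      "(sprott \<mu> p)$3 = x^2 - y - \<mu>*z"
      unfolding sprott_def x_def y_def z_def by simp_all
    show ?thesis unfolding s1 P_def C_def V_def by algebra
  qed
  have "dtheta p (sprott \<mu> p) = 1 / sqrt 3 * ((-3/2 * P - V * P + C) / P)"
    unfolding dtheta_def PP x_def[symmetric] y_def[symmetric] z_def[symmetric] N by simp
  also have "(-3/2 * P - V * P + C) / P = -3/2 - V + C/P" using Ppos by (simp add: field_simps)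
  also have "1 / sqrt 3 * (-3/2 - V + C/P) \<le> 1 / sqrt 3 * (-5/100)"
    using CP2 by (intro mult_left_mono) auto
  also have "\<dots> < - (1/50)" using sqrt3_bounds by (simp add: field_simps)
  finally show "dtheta p (sprott \<mu> p) < - (1/50)" .
qed simp

end
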